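(* Let $\mathbb G=V_1\times V_2$ be a step-two Carnot group with $\mathcal A_h(\mathbb G)=\mathcal A(V_1\times V_2)$. Then $\mathcal A_h(\mathbb G')=\mathcal A(V_1'\times V_2')$ for every step-two Carnot group $\mathbb G'=V_1'\times V_2'$ that is a proper quotient of $\mathbb G$.
   Context: A step-two Carnot group is $\mathbb G=V_1\times V_2$ ($V_1,V_2$ finite-dimensional real vector spaces, $V_2\ne\{0\}$) with a bilinear skew-symmetric $[\cdot,\cdot]:V_1\times V_1\to V_2$ whose image spans $V_2$, and group law $(x,z)\cdot(x',z')=(x+x',z+z'+[x,x'])$. $\mathcal A_h(\mathbb G)$ is the space of maps $f:\mathbb G\to\mathbb R$ such that for all $(x,z)\in\mathbb G$, $y\in V_1$, $t\mapsto f((x,z)\cdot(ty,0))$ is affine; $\mathcal A(W)$ is the space of maps affine in the usual sense on a vector space $W$. A Carnot morphism $\pi:\mathbb G\to\mathbb G'$ is $\pi(x,z)=(\pi_1(x),\pi_2(z))$ with $\pi_1:V_1\to V_1'$, $\pi_2:V_2\to V_2'$ linear and $\pi_2([x,y])=[\pi_1(x),\pi_1(y)]'$. $\mathbb G'$ is a proper quotient of $\mathbb G$ if there is a surjective Carnot morphism $\pi:\mathbb G\to\mathbb G'$ with $\ker\pi\ne\{(0,0)\}$. *)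

theory Defs
  imports "HOL-Analysis.Analysis"
begin

text \<open>Step-two Carnot group structure on V1 x V2 given by a bracket
  br : V1 x V1 -> V2 (bilinear, skew-symmetric, image spanning V2).
  V1, V2 are finite-dimensional real vector spaces, modelled as types of
  class euclidean_space (which forces V2 to be nonzero).\<close>

definition carnot2 :: "('a::euclidean_space \<Rightarrow> 'a \<Rightarrow> 'b::euclidean_space) \<Rightarrow> bool" where
  "carnot2 br \<longleftrightarrow> bilinear br \<and> (\<forall>x y. br x y = - br y x)
     \<and> span (range (\<lambda>(x, y). br x y)) = UNIV"

definition cmul :: "('a::real_vector \<Rightarrow> 'a \<Rightarrow> 'b::real_vector) \<Rightarrow> 'a \<times> 'b \<Rightarrow> 'a \<times> 'b \<Rightarrow> 'a \<times> 'b" where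
  "cmul br p q = (fst p + fst q, snd p + snd q + br (fst p) (fst q))"

definition affine_map :: "('v::real_vector \<Rightarrow> real) \<Rightarrow> bool" where
  "affine_map f \<longleftrightarrow> (\<exists>l c. linear l \<and> (\<forall>v. f v = l v + c))"

definition A_h :: "('a::real_vector \<Rightarrow> 'a \<Rightarrow> 'b::real_vector) \<Rightarrow> ('a \<times> 'b \<Rightarrow> real) set" where
  "A_h br = {f. \<forall>p y. affine_map (\<lambda>t::real. f (cmul br p (t *\<^sub>R y, 0)))}"

definition A_aff :: "('v::real_vector \<Rightarrow> real) set" where
  "A_aff = {f. affine_map f}"

definition carnot_morphism ::
  "('a::real_vector \<Rightarrow> 'a \<Rightarrow> 'b::real_vector) \<Rightarrow> ('c::real_vector \<Rightarrow> 'c \<Rightarrow> 'd::real_vector)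
    \<Rightarrow> ('a \<Rightarrow> 'c) \<Rightarrow> ('b \<Rightarrow> 'd) \<Rightarrow> bool" where
  "carnot_morphism br br' \<pi>1 \<pi>2 \<longleftrightarrow> linear \<pi>1 \<and> linear \<pi>2
     \<and> (\<forall>x y. \<pi>2 (br x y) = br' (\<pi>1 x) (\<pi>1 y))"

definition proper_quotient ::
  "('a::real_vector \<Rightarrow> 'a \<Rightarrow> 'b::real_vector) \<Rightarrow> ('c::real_vector \<Rightarrow> 'c \<Rightarrow> 'd::real_vector) \<Rightarrow> bool" where
  "proper_quotient br br' \<longleftrightarrow> (\<exists>\<pi>1 \<pi>2. carnot_morphism br br' \<pi>1 \<pi>2
     \<and> surj (\<lambda>(x, z). (\<pi>1 x, \<pi>2 z))
     \<and> (\<exists>x z. (x, z) \<noteq> (0, 0) \<and> \<pi>1 x = 0 \<and> \<pi>2 z = 0))"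

end

theory Submission
  imports Defs
begin

lemma affine_line:
  assumes "affine_map f"
  shows "affine_map (\<lambda>t::real. f (a + t *\<^sub>R b))"
proof -
  from assms obtain l c where l: "linear l" "\<And>v. f v = l v + c"
    unfolding affine_map_def by blast
  have "\<forall>t. f (a + t *\<^sub>R b) = (\<lambda>t. t * l b) t + (l a + c)"
    using l by (simp add: linear_add linear_scale)
  moreover have "linear (\<lambda>t::real. t * l b)"
    by (simp add: bounded_linear.linear bounded_linear_mult_left)
  ultimately show ?thesis unfolding affine_map_def by blast
qed

lemma aff_sub_Ah:
  fixes br :: "'a::euclidean_space \<Rightarrow> 'a \<Rightarrow> 'b::euclidean_space"
  assumes "bilinear br"
  shows "A_aff \<subseteq> A_h br"
proof
  fix f :: "'a \<times> 'b \<Rightarrow> real"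
  assume "f \<in> A_aff"
  hence af: "affine_map f" by (simp add: A_aff_def)
  show "f \<in> A_h br"
    unfolding A_h_def
  proof (intro CollectI allI)
    fix p :: "'a \<times> 'b" and y
    have "\<And>t. cmul br p (t *\<^sub>R y, 0) = p + t *\<^sub>R (y, br (fst p) y)"
      using assms by (simp add: cmul_def bilinear_rmul prod_eq_iff)
    then show "affine_map (\<lambda>t::real. f (cmul br p (t *\<^sub>R y, 0)))"
      using affine_line[OF af, of p "(y, br (fst p) y)"] by presburger
  qed
qed

theorem proposition6p5:
  fixes br :: "'a::euclidean_space \<Rightarrow> 'a \<Rightarrow> 'b::euclidean_space"
    and br' :: "'c::euclidean_space \<Rightarrow> 'c \<Rightarrow> 'd::euclidean_space"
  assumes "carnot2 br"
    and "A_h br = A_aff"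
    and "carnot2 br'"
    and "proper_quotient br br'"
  shows "A_h br' = A_aff"
proof
  show "A_aff \<subseteq> A_h br'"
    using assms(3) aff_sub_Ah unfolding carnot2_def by blast
next
  obtain \<pi>1 \<pi>2 where m: "carnot_morphism br br' \<pi>1 \<pi>2"
    and s: "surj (\<lambda>(x, z). (\<pi>1 x, \<pi>2 z))"
    using assms(4) unfolding proper_quotient_def by blast
  have l1: "linear \<pi>1" and l2: "linear \<pi>2" and h: "\<And>x y. \<pi>2 (br x y) = br' (\<pi>1 x) (\<pi>1 y)"
    using m unfolding carnot_morphism_def by auto
  define P where "P = (\<lambda>(x, z). (\<pi>1 x, \<pi>2 z))"
  have lP: "linear P"
    unfolding P_def
    by (rule linearI) (auto simp: linear_add[OF l1] linear_add[OF l2] linear_scale[OF l1] linear_scale[OF l2])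
  obtain \<sigma> where ls: "linear \<sigma>" and ps: "P \<circ> \<sigma> = id"
    using linear_surjective_right_inverse[OF lP] s unfolding P_def by blast
  show "A_h br' \<subseteq> A_aff"
  proof
    fix f assume f: "f \<in> A_h br'"
    have "f \<circ> P \<in> A_h br"
      unfolding A_h_def
    proof (intro CollectI allI)
      fix p :: "'a \<times> 'b" and y
      have "\<And>t. P (cmul br p (t *\<^sub>R y, 0)) = cmul br' (P p) (t *\<^sub>R \<pi>1 y, 0)"
        by (auto simp: P_def cmul_def case_prod_beta linear_add[OF l1] linear_add[OF l2]
            linear_scale[OF l1] h)
      then show "affine_map (\<lambda>t::real. (f \<circ> P) (cmul br p (t *\<^sub>R y, 0)))"
      proof -
        have "affine_map (\<lambda>t::real. f (cmul br' (P p) (t *\<^sub>R \<pi>1 y, 0)))"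
          using f unfolding A_h_def by blast
        then show ?thesis unfolding comp_apply \<open>\<And>t. P (cmul br p (t *\<^sub>R y, 0)) = _\<close> .
      qed
    qed
    then have "affine_map (f \<circ> P)" using assms(2) by (simp add: A_aff_def)
    then obtain l c where l: "linear l" "\<And>v. (f \<circ> P) v = l v + c"
      unfolding affine_map_def by blast
    have "\<And>w. f w = (l \<circ> \<sigma>) w + c"
    proof -
      fix w
      have "f w = (f \<circ> P) (\<sigma> w)" using ps by (metis comp_apply id_apply)
      then show "f w = (l \<circ> \<sigma>) w + c" using l by simp
    qed
    moreover have "linear (l \<circ> \<sigma>)" using l ls by (simp add: linear_compose)
    ultimately show "f \<in> A_aff" unfolding A_aff_def affine_map_def by blast
  qed
qed

end
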